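(* Let $k\ge 1$, $t\ge 0$, $n\geq 2k+t$ and $1\leq r \leq n-k-t+1$ be integers. Let $\mathcal{F} \subseteq\binom{[n]}{k+t}$ be shifted with $|\mathcal{F}|\geq r$. If $r \leq n-k-t$, then $|\mathcal{F}(\bar{n})|\geq r$. If $r=n-k-t+1$, then $|\mathcal{F}(\bar{n})|\geq r-1$.
   Context: A family $\mathcal{F}\subseteq 2^{[n]}$ is shifted if for every $F\in\mathcal{F}$ and all $i<j$ with $i\notin F$, $j\in F$, we have $(F\setminus\{j\})\cup\{i\}\in\mathcal{F}$. $\mathcal{F}(\bar n)=\{F\in\mathcal{F}: n\notin F\}$. $\binom{[n]}{m}$ denotes the $m$-subsets of $[n]=\{1,\dots,n\}$. *)

theory Defs
  imports Main
begin

definition shifted :: "nat \<Rightarrow> nat set set \<Rightarrow> bool" where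
  "shifted n F \<longleftrightarrow> F \<subseteq> Pow {1..n} \<and>
     (\<forall>A\<in>F. \<forall>i j. 1 \<le> i \<and> i < j \<and> j \<le> n \<and> i \<notin> A \<and> j \<in> A \<longrightarrow> (A - {j}) \<union> {i} \<in> F)"

definition avoid_n :: "nat \<Rightarrow> nat set set \<Rightarrow> nat set set" where
  "avoid_n n F = {A \<in> F. n \<notin> A}"

end

theory Submission
  imports Defs
begin

theorem lemma2p2:
  fixes k t n r :: nat and F :: "nat set set"
  assumes "k \<ge> 1" and "n \<ge> 2*k + t"
    and "1 \<le> r" and "r \<le> n - k - t + 1"
    and "F \<subseteq> {A. A \<subseteq> {1..n} \<and> card A = k + t}"
    and "shifted n F" and "card F \<ge> r"
  shows "(r \<le> n - k - t \<longrightarrow> card (avoid_n n F) \<ge> r)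
       \<and> (r = n - k - t + 1 \<longrightarrow> card (avoid_n n F) \<ge> r - 1)"
proof -
  have finF: "finite F"
    by (rule finite_subset[of _ "Pow {1..n}"]) (use assms(5) in auto)
  have finAv: "finite (avoid_n n F)" using finF unfolding avoid_n_def by simp
  show ?thesis
  proof (cases "\<exists>A\<in>F. n \<in> A")
    case False
    then have "avoid_n n F = F" unfolding avoid_n_def by auto
    then show ?thesis using assms(7) by auto
  next
    case True
    then obtain A where AF: "A \<in> F" and nA: "n \<in> A" by blast
    have Asub: "A \<subseteq> {1..n}" and cA: "card A = k + t" using AF assms(5) by auto
    define g where "g i = (A - {n}) \<union> {i}" for i
    have img: "g ` ({1..n} - A) \<subseteq> avoid_n n F"
    proof
      fix X assume "X \<in> g ` ({1..n} - A)"
      then obtain i where i: "i \<in> {1..n}" "i \<notin> A" and X: "X = g i" by blast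
      have "i < n" using i nA by (cases "i = n") auto
      then have "g i \<in> F" using assms(6) AF i nA unfolding shifted_def g_def by auto
      moreover have "n \<notin> g i" using \<open>i < n\<close> unfolding g_def by auto
      ultimately show "X \<in> avoid_n n F" using X unfolding avoid_n_def by auto
    qed
    have inj: "inj_on g ({1..n} - A)"
    proof (rule inj_onI)
      fix x y assume "x \<in> {1..n} - A" "y \<in> {1..n} - A" "g x = g y"
      then show "x = y" unfolding g_def by blast
    qed
    have "card ({1..n} - A) = n - (k + t)"
      using Asub cA by (simp add: card_Diff_subset finite_subset)
    moreover have "card (g ` ({1..n} - A)) \<le> card (avoid_n n F)"
      using img finAv card_mono by blast
    ultimately have "n - (k + t) \<le> card (avoid_n n F)"
      using inj card_image by metis
    then show ?thesis by auto
  qed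
qed

end
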